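(* Let $g:[0,1]\to\mathbb{R}^+$ be Lebesgue integrable and let $f_{ac}(x)=\int_{[0,1]}g(t)\,(1\,!_t\,x)\,dt$ for $x\ge0$. Then (a) $f_{ac}$ is normalized, i.e. $f_{ac}(1)=1$, if and only if $\int_0^1 g(t)\,dt=1$; (b) $f_{ac}$ is symmetric, i.e. $f_{ac}(x)=xf_{ac}(1/x)$ for all $x>0$, if and only if $g(1-t)=g(t)$ for Lebesgue-a.e. $t\in[0,1]$.
   Context: For $t\in[0,1]$, $x\ge0$: $1\,!_t\,x=\dfrac{x}{(1-t)x+t}$ for $(t,x)\ne(0,0)$ and $1\,!_0\,0=1$. *)

theory Defs
  imports "HOL-Analysis.Analysis"
begin

text \<open>Weighted harmonic mean: 1 !_t x = x / ((1-t) x + t), with 1 !_0 0 = 1.\<close>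
definition harm_mean :: "real \<Rightarrow> real \<Rightarrow> real" where
  "harm_mean t x = (if t = 0 \<and> x = 0 then 1 else x / ((1 - t) * x + t))"

definition f_ac :: "(real \<Rightarrow> real) \<Rightarrow> real \<Rightarrow> real" where
  "f_ac g x = (LINT t:{0..1}|lborel. g t * harm_mean t x)"

end

theory Submission imports Defs begin

lemma bnd_int:
  fixes F \<phi> :: "real \<Rightarrow> real"
  assumes F: "integrable lborel F" and Fz: "\<And>t. t \<notin> {0..1} \<Longrightarrow> F t = 0"
    and \<phi>m: "\<phi> \<in> borel_measurable borel" and B: "\<And>t. t \<in> {0..1} \<Longrightarrow> \<bar>\<phi> t\<bar> \<le> B"
  shows "integrable lborel (\<lambda>t. F t * \<phi> t)"
    and "\<bar>\<integral>t. F t * \<phi> t \<partial>lborel\<bar> \<le> B * (\<integral>t. \<bar>F t\<bar> \<partial>lborel)"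
proof -
  have B0: "0 \<le> B" using B[of 0] by auto
  have nb: "\<bar>F t * \<phi> t\<bar> \<le> B * \<bar>F t\<bar>" for t
  proof (cases "t \<in> {0..1}")
    case True then show ?thesis using B[OF True] mult_right_mono[of "\<bar>\<phi> t\<bar>" B "\<bar>F t\<bar>"] by (simp add: abs_mult mult.commute)
  next
    case False then show ?thesis using Fz B0 by simp
  qed
  have Fm: "F \<in> borel_measurable lborel" using F by (rule borel_measurable_integrable)
  show I: "integrable lborel (\<lambda>t. F t * \<phi> t)"
    apply (rule Bochner_Integration.integrable_bound[where f="\<lambda>t. B * F t"])
    using F apply simp
    using Fm \<phi>m apply measurable
    using nb B0 by (simp add: abs_mult)
  have "\<bar>\<integral>t. F t * \<phi> t \<partial>lborel\<bar> \<le> (\<integral>t. \<bar>F t * \<phi> t\<bar> \<partial>lborel)"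
    using integral_norm_bound[of lborel "\<lambda>t. F t * \<phi> t"] by simp
  also have "\<dots> \<le> (\<integral>t. B * \<bar>F t\<bar> \<partial>lborel)"
    by (rule integral_mono) (use I F nb in auto)
  also have "\<dots> = B * (\<integral>t. \<bar>F t\<bar> \<partial>lborel)" by simp
  finally show "\<bar>\<integral>t. F t * \<phi> t \<partial>lborel\<bar> \<le> B * (\<integral>t. \<bar>F t\<bar> \<partial>lborel)" .
qed

lemma small_zero:
  fixes m C :: real
  assumes "\<And>y. y > 0 \<Longrightarrow> \<bar>m\<bar> \<le> y * C"
  shows "m = 0"
proof (rule ccontr)
  assume m: "m \<noteq> 0"
  have C: "C \<ge> 0" using assms[of 1] by simp
  define y where "y = \<bar>m\<bar> / (2 * (C + 1))"
  have y: "y > 0" using m C by (simp add: y_def)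
  have q: "C / (2*(C+1)) < 1" using C by (simp add: divide_less_eq)
  have "y * C = \<bar>m\<bar> * (C / (2*(C+1)))" by (simp add: y_def)
  also have "\<dots> < \<bar>m\<bar> * 1" using q m by (intro mult_strict_left_mono) auto
  finally have "y * C < \<bar>m\<bar>" by simp
  with assms[OF y] show False by simp
qed

lemma moments:
  fixes F :: "real \<Rightarrow> real"
  assumes F: "integrable lborel F" and Fz: "\<And>t. t \<notin> {0..1} \<Longrightarrow> F t = 0"
    and H: "\<And>y. y > 0 \<Longrightarrow> (\<integral>t. F t * (1 / (1 + t * y)) \<partial>lborel) = 0"
  shows "(\<integral>t. F t * t ^ k \<partial>lborel) = 0"
proof -
  define C where "C = (\<integral>t. \<bar>F t\<bar> \<partial>lborel)"
  have Fm[measurable]: "F \<in> borel_measurable lborel" using F by (rule borel_measurable_integrable)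
  have bd: "\<bar>t ^ k / (1 + t * y)\<bar> \<le> 1" if "t \<in> {0..1}" "y > 0" for t y :: real and k :: nat
  proof -
    have "0 \<le> t ^ k" "t ^ k \<le> 1" using that by (auto simp: power_le_one)
    moreover have "1 \<le> 1 + t * y" using that by auto
    ultimately show ?thesis by (simp add: divide_le_eq_1)
  qed
  have I: "integrable lborel (\<lambda>t. F t * (t ^ k / (1 + t * y)))"
   and B: "\<bar>\<integral>t. F t * (t ^ k / (1 + t * y)) \<partial>lborel\<bar> \<le> 1 * C"
    if "y > 0" for y k
    using bnd_int[OF F Fz, of "\<lambda>t. t ^ k / (1 + t * y)" 1] bd[OF _ that] unfolding C_def
    by auto
  have Im: "integrable lborel (\<lambda>t. F t * t ^ k)" for k
  proof (rule bnd_int(1)[OF F Fz, of "\<lambda>t. t ^ k" 1])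
    show "(\<lambda>t::real. t ^ k) \<in> borel_measurable borel" by (intro borel_measurable_continuous_onI continuous_intros)
    fix t :: real assume "t \<in> {0..1}" then show "\<bar>t ^ k\<bar> \<le> 1" by (simp add: power_le_one)
  qed
  have step: "(\<integral>t. F t * t ^ k \<partial>lborel) = 0 \<and> (\<forall>y>0. (\<integral>t. F t * (t ^ Suc k / (1 + t * y)) \<partial>lborel) = 0)"
    if G0: "\<And>y. y > 0 \<Longrightarrow> (\<integral>t. F t * (t ^ k / (1 + t * y)) \<partial>lborel) = 0" for k
  proof -
    have key: "(\<integral>t. F t * t ^ k \<partial>lborel) = y * (\<integral>t. F t * (t ^ Suc k / (1 + t * y)) \<partial>lborel)"
      if y: "y > 0" for y
    proof -
      have eq: "(\<lambda>t. F t * t ^ k) = (\<lambda>t. F t * (t ^ k / (1 + t * y)) + y * (F t * (t ^ Suc k / (1 + t * y))))"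
      proof
        fix t show "F t * t ^ k = F t * (t ^ k / (1 + t * y)) + y * (F t * (t ^ Suc k / (1 + t * y)))"
        proof (cases "t \<in> {0..1}")
          case True then have "t * y \<ge> 0" using y by simp
          then have d: "1 + t * y > 0" by linarith
          have e1: "t ^ k + y * t ^ Suc k = t ^ k * (1 + t * y)" by (simp add: algebra_simps)
          have "t ^ k / (1 + t * y) + y * (t ^ Suc k / (1 + t * y)) = (t ^ k + y * t ^ Suc k) / (1 + t * y)"
            by (simp add: add_divide_distrib)
          also have "\<dots> = t ^ k" unfolding e1 using d by simp
          finally have e2: "t ^ k / (1 + t * y) + y * (t ^ Suc k / (1 + t * y)) = t ^ k" .
          have "F t * (t ^ k / (1 + t * y)) + y * (F t * (t ^ Suc k / (1 + t * y)))
             = F t * (t ^ k / (1 + t * y) + y * (t ^ Suc k / (1 + t * y)))" by (simp add: algebra_simps)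
          then show ?thesis using e2 by simp
        qed (simp add: Fz)
      qed
      have "(\<integral>t. F t * t ^ k \<partial>lborel) = (\<integral>t. F t * (t ^ k / (1 + t * y)) \<partial>lborel) + (\<integral>t. y * (F t * (t ^ Suc k / (1 + t * y))) \<partial>lborel)"
        unfolding eq by (rule Bochner_Integration.integral_add) (intro I[OF y] integrable_mult_right)+
      moreover have "(\<integral>t. y * (F t * (t ^ Suc k / (1 + t * y))) \<partial>lborel) = y * (\<integral>t. F t * (t ^ Suc k / (1 + t * y)) \<partial>lborel)"
        by (rule integral_mult_right_zero)
      ultimately show ?thesis using G0[OF y] by linarith
    qed
    have "\<bar>\<integral>t. F t * t ^ k \<partial>lborel\<bar> \<le> y * C" if y: "y > 0" for y
      using key[OF y] B[OF y, of "Suc k"] y by (simp add: abs_mult)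
    then have m: "(\<integral>t. F t * t ^ k \<partial>lborel) = 0" by (rule small_zero)
    show ?thesis using m key by auto
  qed
  have P: "\<forall>y>0. (\<integral>t. F t * (t ^ k / (1 + t * y)) \<partial>lborel) = 0" for k
  proof (induction k)
    case 0 then show ?case using H by simp
  next
    case (Suc k) then show ?case using step[of k] by blast
  qed
  show ?thesis using step[of k] P[of k] by blast
qed

lemma mom_int:
  fixes F :: "real \<Rightarrow> real"
  assumes F: "integrable lborel F" and Fz: "\<And>t. t \<notin> {0..1} \<Longrightarrow> F t = 0"
  shows "integrable lborel (\<lambda>t. F t * t ^ k)"
proof (rule bnd_int(1)[OF F Fz, of "\<lambda>t. t ^ k" 1])
  show "(\<lambda>t::real. t ^ k) \<in> borel_measurable borel" by (intro borel_measurable_continuous_onI continuous_intros)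
  fix t :: real assume "t \<in> {0..1}" then show "\<bar>t ^ k\<bar> \<le> 1" by (simp add: power_le_one)
qed

lemma cont_zero:
  fixes F \<phi> :: "real \<Rightarrow> real"
  assumes F: "integrable lborel F" and Fz: "\<And>t. t \<notin> {0..1} \<Longrightarrow> F t = 0"
    and M: "\<And>k. (\<integral>t. F t * t ^ k \<partial>lborel) = 0"
    and \<phi>c: "continuous_on UNIV \<phi>" and \<phi>b: "\<And>t. \<bar>\<phi> t\<bar> \<le> 1"
  shows "(\<integral>t. F t * \<phi> t \<partial>lborel) = 0"
proof -
  define C where "C = (\<integral>t. \<bar>F t\<bar> \<partial>lborel)"
  have \<phi>m: "\<phi> \<in> borel_measurable borel" using \<phi>c by (rule borel_measurable_continuous_onI)
  have I\<phi>: "integrable lborel (\<lambda>t. F t * \<phi> t)" using bnd_int(1)[OF F Fz \<phi>m, of 1] \<phi>b by auto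
  have "\<bar>\<integral>t. F t * \<phi> t \<partial>lborel\<bar> \<le> e * C" if e: "e > 0" for e
  proof -
    have "continuous_on {0..1} \<phi>" using \<phi>c by (rule continuous_on_subset) auto
    then obtain p where p: "real_polynomial_function p" "\<And>x. x \<in> {0..1} \<Longrightarrow> \<bar>\<phi> x - p x\<bar> < e"
      using Stone_Weierstrass_real_polynomial_function[of "{0..1::real}" \<phi> e] e by auto
    obtain a n where pe: "p = (\<lambda>x. \<Sum>i\<le>n. a i * x ^ i)"
      using real_polynomial_function_imp_sum[OF p(1)] by blast
    have pm: "p \<in> borel_measurable borel" unfolding pe by measurable
    have eqp: "(\<lambda>t. F t * p t) = (\<lambda>t. \<Sum>i\<le>n. a i * (F t * t ^ i))"
      unfolding pe by (simp add: sum_distrib_left algebra_simps)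
    have Ip: "integrable lborel (\<lambda>t. F t * p t)"
      unfolding eqp by (intro Bochner_Integration.integrable_sum integrable_mult_right mom_int[OF F Fz])
    have Zp: "(\<integral>t. F t * p t \<partial>lborel) = 0"
      unfolding eqp
      by (subst Bochner_Integration.integral_sum) (auto intro: integrable_mult_right mom_int[OF F Fz] simp: M)
    have dm: "(\<lambda>t. \<phi> t - p t) \<in> borel_measurable borel" using \<phi>m pm by measurable
    have bd: "\<bar>\<integral>t. F t * (\<phi> t - p t) \<partial>lborel\<bar> \<le> e * C"
      using bnd_int(2)[OF F Fz dm, of e] p(2) unfolding C_def by (auto intro: less_imp_le)
    have "(\<integral>t. F t * \<phi> t \<partial>lborel) = (\<integral>t. F t * (\<phi> t - p t) + F t * p t \<partial>lborel)"
      by (simp add: algebra_simps)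
    also have "\<dots> = (\<integral>t. F t * (\<phi> t - p t) \<partial>lborel) + (\<integral>t. F t * p t \<partial>lborel)"
      by (rule Bochner_Integration.integral_add) (use bnd_int(1)[OF F Fz dm, of e] p(2) Ip in \<open>auto intro: less_imp_le\<close>)
    finally show ?thesis using bd Zp by simp
  qed
  then show ?thesis by (intro small_zero) auto
qed

lemma ind_zero:
  fixes F :: "real \<Rightarrow> real"
  assumes F: "integrable lborel F"
    and Cz: "\<And>\<phi>. continuous_on UNIV \<phi> \<Longrightarrow> (\<And>t. \<bar>\<phi> t\<bar> \<le> 1) \<Longrightarrow> (\<integral>t. F t * \<phi> t \<partial>lborel) = 0"
  shows "(\<integral>t. F t * indicator {a<..} t \<partial>lborel) = 0"
proof -
  have Fm[measurable]: "F \<in> borel_measurable lborel" using F by (rule borel_measurable_integrable)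
  define s where "s n t = F t * min 1 (max 0 (real n * (t - a)))" for n t
  have lim: "(\<lambda>n. s n t) \<longlonglongrightarrow> F t * indicator {a<..} t" for t
  proof (cases "t \<le> a")
    case True
    then have nn: "real n * (t - a) \<le> 0" for n by (simp add: mult_nonneg_nonpos)
    have "max 0 (real n * (t - a)) = 0" for n using nn[of n] by (auto simp: max_def)
    then have "s n t = 0" for n unfolding s_def by simp
    then show ?thesis using True by simp
  next
    case False
    then have ta: "t - a > 0" by simp
    obtain N where N: "1 / (t - a) < real N" using reals_Archimedean2 by blast
    have "eventually (\<lambda>n. s n t = F t * indicator {a<..} t) sequentially"
      unfolding eventually_sequentially
    proof (intro exI allI impI)
      fix n assume "N \<le> n"
      then have "1 / (t - a) < real n" using N by (meson less_le_trans of_nat_le_iff)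
      then have "1 < real n * (t - a)" using ta by (simp add: field_simps)
      then show "s n t = F t * indicator {a<..} t" using False unfolding s_def by simp
    qed
    then show ?thesis by (rule tendsto_eventually)
  qed
  have "(\<lambda>n. integral\<^sup>L lborel (s n)) \<longlonglongrightarrow> (\<integral>t. F t * indicator {a<..} t \<partial>lborel)"
  proof (rule integral_dominated_convergence[where w="\<lambda>t. \<bar>F t\<bar>"])
    show "(\<lambda>t. F t * indicator {a<..} t) \<in> borel_measurable lborel" by measurable
    show "s n \<in> borel_measurable lborel" for n unfolding s_def by measurable
    show "integrable lborel (\<lambda>t. \<bar>F t\<bar>)" using F by (rule integrable_abs)
    show "AE t in lborel. (\<lambda>n. s n t) \<longlonglongrightarrow> F t * indicator {a<..} t" using lim by simp
    show "AE t in lborel. norm (s n t) \<le> \<bar>F t\<bar>" for n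
      unfolding s_def by (auto simp: abs_mult intro!: mult_left_le)
  qed
  moreover have "integral\<^sup>L lborel (s n) = 0" for n
    unfolding s_def by (rule Cz) (auto intro!: continuous_intros)
  ultimately have "(\<lambda>n. 0::real) \<longlonglongrightarrow> (\<integral>t. F t * indicator {a<..} t \<partial>lborel)" by simp
  then have "0 = (\<integral>t. F t * indicator {a<..} t \<partial>lborel)" by (simp only: LIMSEQ_const_iff)
  then show ?thesis by simp
qed

lemma ae_zero:
  fixes F :: "real \<Rightarrow> real"
  assumes F: "integrable lborel F"
    and I0: "\<And>a. (\<integral>t. F t * indicator {a<..} t \<partial>lborel) = 0"
  shows "AE t in lborel. F t = 0"
proof -
  have Fm[measurable]: "F \<in> borel_measurable lborel" using F by (rule borel_measurable_integrable)
  define P where "P t = max 0 (F t)" for t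
  define N where "N t = max 0 (- F t)" for t
  have Pm[measurable]: "P \<in> borel_measurable lborel" unfolding P_def by measurable
  have Nm[measurable]: "N \<in> borel_measurable lborel" unfolding N_def by measurable
  have IP: "integrable lborel P" unfolding P_def by (intro integrable_max F) simp
  have IN: "integrable lborel N" unfolding N_def by (intro integrable_max integrable_minus F) simp
  have em: "emeasure (density lborel (\<lambda>t. ennreal (Q t))) {a<..} = ennreal (\<integral>t. Q t * indicator {a<..} t \<partial>lborel)"
    if IQ: "integrable lborel Q" and Q0: "\<And>t. Q t \<ge> 0" for Q :: "real \<Rightarrow> real" and a
  proof -
    have Qm[measurable]: "Q \<in> borel_measurable lborel" using IQ by (rule borel_measurable_integrable)
    have "emeasure (density lborel (\<lambda>t. ennreal (Q t))) {a<..} = (\<integral>\<^sup>+ t. ennreal (Q t) * indicator {a<..} t \<partial>lborel)"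
      by (rule emeasure_density) auto
    also have "\<dots> = (\<integral>\<^sup>+ t. ennreal (Q t * indicator {a<..} t) \<partial>lborel)"
      by (intro nn_integral_cong) (auto split: split_indicator)
    also have "\<dots> = ennreal (\<integral>t. Q t * indicator {a<..} t \<partial>lborel)"
      by (rule nn_integral_eq_integral) (auto intro: integrable_real_mult_indicator IQ simp: Q0)
    finally show ?thesis .
  qed
  have eqi: "(\<integral>t. P t * indicator {a<..} t \<partial>lborel) = (\<integral>t. N t * indicator {a<..} t \<partial>lborel)" for a
  proof -
    have "(\<integral>t. P t * indicator {a<..} t \<partial>lborel) - (\<integral>t. N t * indicator {a<..} t \<partial>lborel)
        = (\<integral>t. P t * indicator {a<..} t - N t * indicator {a<..} t \<partial>lborel)"
      by (rule Bochner_Integration.integral_diff[symmetric]) (auto intro: integrable_real_mult_indicator IP IN)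
    also have "\<dots> = (\<integral>t. F t * indicator {a<..} t \<partial>lborel)"
      by (intro Bochner_Integration.integral_cong) (auto simp: P_def N_def split: split_indicator)
    finally show ?thesis using I0[of a] by simp
  qed
  have "density lborel (\<lambda>t. ennreal (P t)) = density lborel (\<lambda>t. ennreal (N t))"
  proof (rule measure_eqI_lessThan)
    show "sets (density lborel (\<lambda>t. ennreal (P t))) = sets borel" by simp
    show "sets (density lborel (\<lambda>t. ennreal (N t))) = sets borel" by simp
    show "emeasure (density lborel (\<lambda>t. ennreal (P t))) {x<..} < \<infinity>" for x
      using em[OF IP, of x] by (simp add: P_def)
    show "emeasure (density lborel (\<lambda>t. ennreal (P t))) {x<..} = emeasure (density lborel (\<lambda>t. ennreal (N t))) {x<..}" for x
      using em[OF IP, of x] em[OF IN, of x] eqi[of x] by (simp add: P_def N_def)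
  qed
  then have "AE t in lborel. ennreal (P t) = ennreal (N t)"
    by (intro sigma_finite_measure.density_unique[OF lborel.sigma_finite_measure_axioms]) auto
  then show ?thesis
    by eventually_elim (auto simp: P_def N_def max_def split: if_splits)
qed

lemma hm_meas: "(\<lambda>t. harm_mean t x) \<in> borel_measurable borel"
  unfolding harm_mean_def by measurable

lemma hm_den:
  assumes "x > 0" "t \<in> {0..1::real}" shows "(1 - t) * x + t > 0"
proof (cases "t = 0")
  case True then show ?thesis using assms by simp
next
  case False then have "t > 0" using assms by simp
  moreover have "(1 - t) * x \<ge> 0" using assms by simp
  ultimately show ?thesis by linarith
qed

lemma hm_bound:
  assumes x: "x > 0" and t: "t \<in> {0..1::real}" shows "\<bar>harm_mean t x\<bar> \<le> 1 + x"
proof -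
  have d: "(1 - t) * x + t > 0" by (rule hm_den[OF x t])
  have "(1 + x) * ((1 - t) * x + t) = x + (t + (1 - t) * x^2)" by (simp add: algebra_simps power2_eq_square)
  moreover have "t + (1 - t) * x^2 \<ge> 0" using t by simp
  ultimately have "x \<le> (1 + x) * ((1 - t) * x + t)" by linarith
  then have "x / ((1 - t) * x + t) \<le> 1 + x" using d by (simp add: divide_le_eq)
  moreover have "x / ((1 - t) * x + t) \<ge> 0" using d x by simp
  moreover have "harm_mean t x = x / ((1 - t) * x + t)" using x by (simp add: harm_mean_def)
  ultimately show ?thesis by (simp only: abs_of_nonneg)
qed

lemma hm_sym:
  assumes x: "x > 0" and t: "t \<in> {0..1::real}" shows "x * harm_mean t (1 / x) = harm_mean (1 - t) x"
proof -
  have d1: "(1 - t) * (1 / x) + t > 0" using hm_den[of "1/x" t] x t by simp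
  have d2: "(1 - (1 - t)) * x + (1 - t) > 0" using hm_den[OF x, of "1 - t"] t by simp
  have e: "x * ((1 - t) * (1 / x) + t) = (1 - (1 - t)) * x + (1 - t)" using x by (simp add: field_simps)
  have "x * harm_mean t (1 / x) = x * ((1 / x) / ((1 - t) * (1 / x) + t))"
    using x by (simp add: harm_mean_def)
  also have "\<dots> = 1 / ((1 - t) * (1 / x) + t)" using x by simp
  also have "\<dots> = x / (x * ((1 - t) * (1 / x) + t))" using x by simp
  also have "\<dots> = harm_mean (1 - t) x" unfolding e using x by (simp add: harm_mean_def)
  finally show ?thesis .
qed

lemma hm_y:
  assumes y: "y > 0" and t: "t \<in> {0..1::real}" shows "harm_mean t (1 / (1 + y)) = 1 / (1 + t * y)"
proof -
  have y1: "1 + y > 0" using y by simp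
  have d: "(1 - t) * (1 / (1 + y)) + t > 0" using hm_den[of "1/(1+y)" t] y t by simp
  have e: "(1 + y) * ((1 - t) * (1 / (1 + y)) + t) = 1 + t * y" using y1 by (simp add: field_simps)
  have "harm_mean t (1 / (1 + y)) = (1 / (1 + y)) / ((1 - t) * (1 / (1 + y)) + t)"
    using y1 by (simp add: harm_mean_def)
  also have "\<dots> = 1 / ((1 + y) * ((1 - t) * (1 / (1 + y)) + t))" by (rule divide_divide_eq_left)
  also have "\<dots> = 1 / (1 + t * y)" unfolding e ..
  finally show ?thesis .
qed

theorem mainTheorem13:
  fixes g :: "real \<Rightarrow> real"
  assumes g_int: "set_integrable lborel {0..1} g"
    and g_nonneg: "\<And>t. t \<in> {0..1} \<Longrightarrow> g t \<ge> 0"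
  shows "(f_ac g 1 = 1 \<longleftrightarrow> (LINT t:{0..1}|lborel. g t) = 1)
    \<and> ((\<forall>x>0. f_ac g x = x * f_ac g (1 / x)) \<longleftrightarrow>
         (AE t in lborel. t \<in> {0..1} \<longrightarrow> g (1 - t) = g t))"
proof -
  define G where "G t = indicator {0..1} t * g t" for t :: real
  have GI: "integrable lborel G" using g_int unfolding set_integrable_def G_def by simp
  have Gz: "\<And>t. t \<notin> {0..1} \<Longrightarrow> G t = 0" unfolding G_def by simp
  have facG: "f_ac g x = (\<integral>t. G t * harm_mean t x \<partial>lborel)" for x
    unfolding f_ac_def set_lebesgue_integral_def G_def by (simp add: mult.assoc)
  have partA: "f_ac g 1 = 1 \<longleftrightarrow> (LINT t:{0..1}|lborel. g t) = 1"
  proof -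
    have "\<And>t. harm_mean t 1 = 1" by (simp add: harm_mean_def)
    then show ?thesis by (simp add: f_ac_def)
  qed
  define G1 where "G1 t = G (1 - t)" for t
  have G1I: "integrable lborel G1"
    using lborel_integrable_real_affine_iff[of "-1" G 1] GI unfolding G1_def by simp
  have G1z: "G1 t = 0" if "t \<notin> {0..1}" for t
  proof -
    have "1 - t \<notin> {0..1}" using that by auto
    then show ?thesis unfolding G1_def by (rule Gz)
  qed
  define H where "H t = G t - G1 t" for t
  have HI: "integrable lborel H" unfolding H_def using GI G1I by simp
  have Hz: "\<And>t. t \<notin> {0..1} \<Longrightarrow> H t = 0" unfolding H_def using Gz G1z by simp
  have IGh: "integrable lborel (\<lambda>t. Q t * harm_mean t x)"
    if "integrable lborel Q" "\<And>t. t \<notin> {0..1} \<Longrightarrow> Q t = 0" "x > 0" for Q x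
    using bnd_int(1)[OF that(1,2) hm_meas, of x "1 + x"] hm_bound[OF that(3)] by auto
  have key: "f_ac g x - x * f_ac g (1 / x) = (\<integral>t. H t * harm_mean t x \<partial>lborel)" if x: "x > 0" for x
  proof -
    have "x * f_ac g (1 / x) = (\<integral>t. x * (G t * harm_mean t (1 / x)) \<partial>lborel)"
      unfolding facG by simp
    also have "\<dots> = (\<integral>t. G t * harm_mean (1 - t) x \<partial>lborel)"
    proof (intro Bochner_Integration.integral_cong refl)
      fix t show "x * (G t * harm_mean t (1 / x)) = G t * harm_mean (1 - t) x"
        using hm_sym[OF x, of t] Gz[of t] by (cases "t \<in> {0..1}") (auto simp: algebra_simps)
    qed
    also have "\<dots> = (\<integral>t. G1 t * harm_mean t x \<partial>lborel)"
      using lborel_integral_real_affine[of "-1" "\<lambda>t. G t * harm_mean (1 - t) x" 1] unfolding G1_def by simp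
    finally have e1: "x * f_ac g (1 / x) = (\<integral>t. G1 t * harm_mean t x \<partial>lborel)" .
    have "(\<integral>t. H t * harm_mean t x \<partial>lborel) = (\<integral>t. G t * harm_mean t x - G1 t * harm_mean t x \<partial>lborel)"
      unfolding H_def by (simp add: algebra_simps)
    also have "\<dots> = (\<integral>t. G t * harm_mean t x \<partial>lborel) - (\<integral>t. G1 t * harm_mean t x \<partial>lborel)"
      by (rule Bochner_Integration.integral_diff) (intro IGh GI G1I Gz G1z x; assumption)+
    finally show ?thesis using e1 facG[of x] by simp
  qed
  have partB: "(\<forall>x>0. f_ac g x = x * f_ac g (1 / x)) \<longleftrightarrow>
         (AE t in lborel. t \<in> {0..1} \<longrightarrow> g (1 - t) = g t)"
  proof
    assume sym: "\<forall>x>0. f_ac g x = x * f_ac g (1 / x)"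
    have K0: "(\<integral>t. H t * harm_mean t x \<partial>lborel) = 0" if "x > 0" for x
    proof -
      have "f_ac g x = x * f_ac g (1 / x)" using sym that by blast
      then show ?thesis using key[OF that] by linarith
    qed
    have Y: "(\<integral>t. H t * (1 / (1 + t * y)) \<partial>lborel) = 0" if y: "y > 0" for y
    proof -
      have "(\<integral>t. H t * (1 / (1 + t * y)) \<partial>lborel) = (\<integral>t. H t * harm_mean t (1 / (1 + y)) \<partial>lborel)"
      proof (intro Bochner_Integration.integral_cong refl)
        fix t show "H t * (1 / (1 + t * y)) = H t * harm_mean t (1 / (1 + y))"
          using hm_y[OF y, of t] Hz[of t] by (cases "t \<in> {0..1}") auto
      qed
      also have "\<dots> = 0" using K0[of "1 / (1 + y)"] y by simp
      finally show ?thesis .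
    qed
    have M: "(\<integral>t. H t * t ^ k \<partial>lborel) = 0" for k by (rule moments[OF HI Hz Y])
    have AEH: "AE t in lborel. H t = 0"
      by (intro ae_zero[OF HI] ind_zero[OF HI] cont_zero[OF HI Hz M]) auto
    then show "AE t in lborel. t \<in> {0..1} \<longrightarrow> g (1 - t) = g t"
      by eventually_elim (auto simp: H_def G1_def G_def)
  next
    assume ae: "AE t in lborel. t \<in> {0..1} \<longrightarrow> g (1 - t) = g t"
    have "AE t in lborel. H t = 0"
      using ae
    proof eventually_elim
      case (elim t) then show ?case
        by (cases "t \<in> {0..1}") (auto simp: H_def G1_def G_def)
    qed
    then have "AE t in lborel. H t * harm_mean t x = 0" for x by eventually_elim simp
    then have "(\<integral>t. H t * harm_mean t x \<partial>lborel) = 0" for x by (rule integral_eq_zero_AE)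
    then show "\<forall>x>0. f_ac g x = x * f_ac g (1 / x)" using key by (metis eq_iff_diff_eq_0)
  qed
  show ?thesis using partA partB by blast
qed

end
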